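(* For each fixed $h$, the function $n\mapsto M(n,h)=\frac{n+2-p_{min}(n+h)}{3}$ is non-decreasing in $n$.
   Context: A polyiamond is a planar shape formed by gluing together finitely many congruent (closed) equilateral triangles (tiles) of the regular triangular lattice along their edges: any two tiles that intersect meet in an entire edge, and the union has connected interior. The perimeter of a polyiamond is the number of lattice edges on its topological boundary, and $p_{min}(m)$ is the minimum perimeter over all polyiamonds with $m$ tiles. *)

theory Defs
  imports Complex_Main
begin

text \<open>Using the lattice basis
  u = (1,0), v = (1/2, sqrt 3/2), the cell (x, y, False) is the upward triangle
  with vertices x u + y v, (x+1) u + y v, x u + (y+1) v, and the cell (x, y, True)
  is the downward triangle with vertices (x+1) u + y v, x u + (y+1) v,
  (x+1) u + (y+1) v.\<close>

type_synonym tile = "int \<times> int \<times> bool"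

text \<open>Two tiles share an entire edge.  Up (x,y) shares its three edges with
  Down (x,y), Down (x-1,y) and Down (x,y-1).\<close>

definition tile_adj :: "tile \<Rightarrow> tile \<Rightarrow> bool" where
  "tile_adj s t \<longleftrightarrow>
     (case (s, t) of
        ((x, y, False), (x', y', True)) \<Rightarrow>
            (x', y') = (x, y) \<or> (x', y') = (x - 1, y) \<or> (x', y') = (x, y - 1)
      | ((x, y, True), (x', y', False)) \<Rightarrow>
            (x, y) = (x', y') \<or> (x, y) = (x' - 1, y') \<or> (x, y) = (x', y' - 1)
      | _ \<Rightarrow> False)"

text \<open>A polyiamond: a finite nonempty set of tiles whose union has connected
  interior, i.e. which is connected via edge-adjacency inside the set.\<close>

definition polyiamond :: "tile set \<Rightarrow> bool" where
  "polyiamond P \<longleftrightarrow> finite P \<and> P \<noteq> {} \<and>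
     (\<forall>s\<in>P. \<forall>t\<in>P. (s, t) \<in> {(a, b). a \<in> P \<and> b \<in> P \<and> tile_adj a b}\<^sup>*)"

text \<open>Every lattice edge
  is shared by exactly two tiles; it lies on the topological boundary iff exactly
  one of these two tiles belongs to P.  Such an edge is counted by the unique pair
  (inner tile, outer tile).\<close>

definition perimeter :: "tile set \<Rightarrow> nat" where
  "perimeter P = card {(s, t). s \<in> P \<and> t \<notin> P \<and> tile_adj s t}"

definition pmin :: "nat \<Rightarrow> nat" where
  "pmin m = (LEAST p. \<exists>P. polyiamond P \<and> card P = m \<and> perimeter P = p)"

definition M :: "nat \<Rightarrow> int \<Rightarrow> real" where
  "M n h = (real n + 2 - real (pmin (nat (int n + h)))) / 3"

end

theory Submission
  imports Defs
begin

fun nbrs :: "tile \<Rightarrow> tile set" where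
  "nbrs (x, y, b) = (if b then {(x,y,False),(x+1,y,False),(x,y+1,False)}
                     else {(x,y,True),(x-1,y,True),(x,y-1,True)})"

lemma adj_nbrs: "tile_adj s t \<longleftrightarrow> t \<in> nbrs s"
proof -
  obtain x y b where s: "s = (x,y,b)" by (cases s) auto
  obtain x' y' b' where t: "t = (x',y',b')" by (cases t) auto
  show ?thesis unfolding s t by (cases b; cases b'; auto simp: tile_adj_def)
qed

lemma adj_sym: "tile_adj s t \<Longrightarrow> tile_adj t s"
proof -
  obtain x y b where s: "s = (x,y,b)" by (cases s) auto
  obtain x' y' b' where t: "t = (x',y',b')" by (cases t) auto
  show "tile_adj s t \<Longrightarrow> tile_adj t s" unfolding s t by (cases b; cases b'; auto simp: tile_adj_def)
qed

lemma card_nbrs: "card (nbrs s) = 3"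
  by (cases s) auto

lemma fin_nbrs: "finite (nbrs s)"
  by (cases s) auto

fun fval :: "tile \<Rightarrow> int" where
  "fval (x, y, b) = 2*(x+y) + (if b then 1 else 0)"

lemma outside_nbr:
  assumes "finite P" "P \<noteq> {}"
  shows "\<exists>s\<in>P. \<exists>t. t \<notin> P \<and> tile_adj s t"
proof -
  define m where "m = Max (fval ` P)"
  have "m \<in> fval ` P" using assms unfolding m_def by simp
  then obtain s where sP: "s \<in> P" and fs: "fval s = m" by auto
  have le: "\<And>p. p \<in> P \<Longrightarrow> fval p \<le> m" using assms unfolding m_def by simp
  obtain x y b where s: "s = (x,y,b)" by (cases s) auto
  define t where "t = (if b then (x+1,y,False) else (x,y,True))"
  have "fval t = fval s + 1" unfolding t_def s by auto
  hence "t \<notin> P" using le fs by fastforce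
  moreover have "tile_adj s t" unfolding adj_nbrs t_def s by auto
  ultimately show ?thesis using sP by blast
qed

lemma grow:
  assumes "polyiamond P"
  shows "\<exists>Q. polyiamond Q \<and> card Q = Suc (card P) \<and> perimeter Q \<le> perimeter P + 1"
proof -
  have fin: "finite P" and ne: "P \<noteq> {}" using assms unfolding polyiamond_def by auto
  obtain s t where sP: "s \<in> P" and tP: "t \<notin> P" and adj: "tile_adj s t"
    using outside_nbr[OF fin ne] by blast
  define Q where "Q = insert t P"
  define R where "R = (\<lambda>A. {(a, b). a \<in> A \<and> b \<in> A \<and> tile_adj a b})"
  have conP: "\<forall>a\<in>P. \<forall>b\<in>P. (a,b) \<in> (R P)\<^sup>*" using assms unfolding polyiamond_def R_def by auto
  have sub: "R P \<subseteq> R Q" unfolding R_def Q_def by auto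
  have st: "(s,t) \<in> R Q" and ts: "(t,s) \<in> R Q" using sP adj adj_sym unfolding R_def Q_def by auto
  have con: "\<forall>a\<in>Q. \<forall>b\<in>Q. (a,b) \<in> (R Q)\<^sup>*"
  proof (intro ballI)
    fix a b assume a: "a \<in> Q" and b: "b \<in> Q"
    have PP: "\<And>a b. a \<in> P \<Longrightarrow> b \<in> P \<Longrightarrow> (a,b) \<in> (R Q)\<^sup>*"
      using conP rtrancl_mono[OF sub] by blast
    show "(a,b) \<in> (R Q)\<^sup>*"
    proof (cases "a = t")
      case True
      show ?thesis
      proof (cases "b = t")
        case True with \<open>a = t\<close> show ?thesis by simp
      next
        case False
        hence "b \<in> P" using b Q_def by auto
        hence "(s,b) \<in> (R Q)\<^sup>*" using PP sP by blast
        thus ?thesis using ts True by (meson converse_rtrancl_into_rtrancl)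
      qed
    next
      case False
      hence aP: "a \<in> P" using a Q_def by auto
      show ?thesis
      proof (cases "b = t")
        case True
        have "(a,s) \<in> (R Q)\<^sup>*" using PP sP aP by blast
        thus ?thesis using st True by (meson rtrancl_into_rtrancl)
      next
        case False
        hence "b \<in> P" using b Q_def by auto
        thus ?thesis using PP aP by blast
      qed
    qed
  qed
  have polyQ: "polyiamond Q" using con fin unfolding polyiamond_def Q_def R_def by auto
  have cardQ: "card Q = Suc (card P)" using fin tP unfolding Q_def by simp
  define BP where "BP = {(a, b). a \<in> P \<and> b \<notin> P \<and> tile_adj a b}"
  define BQ where "BQ = {(a, b). a \<in> Q \<and> b \<notin> Q \<and> tile_adj a b}"
  have finBP: "finite BP"
  proof -
    have "BP \<subseteq> Sigma P nbrs" unfolding BP_def by (auto simp: adj_nbrs)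
    moreover have "finite (Sigma P nbrs)" using fin fin_nbrs by auto
    ultimately show ?thesis by (rule finite_subset)
  qed
  have stBP: "(s,t) \<in> BP" unfolding BP_def using sP tP adj by auto
  have "BQ \<subseteq> (BP - {(s,t)}) \<union> Pair t ` (nbrs t - {s})"
    unfolding BQ_def BP_def Q_def using sP by (auto simp: adj_nbrs)
  hence c1: "card BQ \<le> card ((BP - {(s,t)}) \<union> Pair t ` (nbrs t - {s}))"
    using finBP fin_nbrs by (intro card_mono) auto
  have c2: "card ((BP - {(s,t)}) \<union> Pair t ` (nbrs t - {s})) \<le> card (BP - {(s,t)}) + card (Pair t ` (nbrs t - {s}))"
    by (rule card_Un_le)
  have c3: "card (BP - {(s,t)}) = card BP - 1" using stBP finBP by simp
  have c4: "card (Pair t ` (nbrs t - {s})) \<le> card (nbrs t - {s})" by (rule card_image_le) (simp add: fin_nbrs)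
  have c5: "card (nbrs t - {s}) = 2"
  proof -
    have "s \<in> nbrs t" using adj_sym[OF adj] by (simp add: adj_nbrs)
    thus ?thesis using card_nbrs[of t] fin_nbrs[of t] by simp
  qed
  have c6: "card BP \<ge> 1" using stBP finBP card_0_eq by fastforce
  have "card BQ \<le> card BP + 1" using c1 c2 c3 c4 c5 c6 by linarith
  hence "perimeter Q \<le> perimeter P + 1" unfolding perimeter_def BQ_def BP_def by simp
  thus ?thesis using polyQ cardQ by blast
qed

lemma exists_poly: "m \<ge> 1 \<Longrightarrow> \<exists>P. polyiamond P \<and> card P = m"
proof (induction m rule: nat_induct_at_least)
  case base
  have "polyiamond {(0,0,False)}" unfolding polyiamond_def by auto
  thus ?case by force
next
  case (Suc m)
  then obtain P where "polyiamond P" "card P = m" by blast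
  thus ?case using grow by blast
qed

lemma pmin_step:
  assumes "m \<ge> 1" shows "pmin (Suc m) \<le> pmin m + 1"
proof -
  obtain P0 where "polyiamond P0" "card P0 = m" using exists_poly assms by blast
  hence "\<exists>p. \<exists>P. polyiamond P \<and> card P = m \<and> perimeter P = p" by blast
  from LeastI_ex[OF this] obtain P where P: "polyiamond P" "card P = m" "perimeter P = pmin m"
    unfolding pmin_def by blast
  obtain Q where Q: "polyiamond Q" "card Q = Suc m" "perimeter Q \<le> perimeter P + 1"
    using grow[OF P(1)] P(2) by blast
  have "pmin (Suc m) \<le> perimeter Q" unfolding pmin_def
    by (rule Least_le) (use Q in blast)
  thus ?thesis using Q P by simp
qed

lemma pmin_steps:
  assumes "m \<ge> 1" shows "pmin (m + k) \<le> pmin m + k"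
proof (induction k)
  case 0 then show ?case by simp
next
  case (Suc k)
  have "pmin (Suc (m + k)) \<le> pmin (m + k) + 1" using assms pmin_step by simp
  thus ?case using Suc by simp
qed

theorem lemma3:
  fixes h :: int and n n' :: nat
  assumes "1 \<le> int n + h" and "n \<le> n'"
  shows "M n h \<le> M n' h"
proof -
  define m where "m = nat (int n + h)"
  define k where "k = n' - n"
  have m1: "m \<ge> 1" using assms(1) unfolding m_def by simp
  have eq: "nat (int n' + h) = m + k" using assms unfolding m_def k_def by simp
  have "pmin (m + k) \<le> pmin m + k" using pmin_steps[OF m1] .
  hence "real (pmin (m + k)) \<le> real (pmin m) + real k" by linarith
  moreover have "real n' = real n + real k" using assms(2) unfolding k_def by simp
  ultimately show ?thesis unfolding M_def eq m_def[symmetric] by (simp add: divide_right_mono)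
qed

end
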